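(* Let $\mathcal{G}$, $A$ and $L_k$ be as in the context, and for $\Phi\in\mathcal{O}_{\mathcal{I}}^+(n,k)$ let $\Phi^{\mathrm{cut}}(\Phi)=\|I-\Phi^TA\Phi\|$ and $\Phi^{\mathrm{cut}}_{\mathcal{G}}=\inf_{\Phi\in\mathcal{O}_{\mathcal{I}}^+(n,k)}\|I-\Phi^TA\Phi\|$. Then: (i) $\Phi^{\mathrm{cut}}\ge0$ and $\Phi^{\mathrm{cut}}$ is invariant under renumberings of the nodes (i.e. $\|I-(P\Phi)^T(PAP^T)(P\Phi)\|=\|I-\Phi^TA\Phi\|$ for every permutation matrix $P$); (ii) $\Phi^{\mathrm{cut}}_{\mathcal{G}}=0$ if and only if $\mathcal{G}$ is $k$-partitionable; (iii) the Cheeger inequality $L_k=\min_{Y^TY=I}\|I-Y^TAY\|\le\Phi^{\mathrm{cut}}_{\mathcal{G}}$ holds.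
   Context: $\mathcal{G}$ is an undirected graph on $n$ nodes with symmetric, entrywise nonnegative adjacency matrix $B$ with zero diagonal; $d=B(1,\dots,1)^T$ is assumed entrywise positive, $D=\operatorname{diag}(d)$, $A=D^{-1/2}BD^{-1/2}$ with eigenvalues $\lambda_1\ge\cdots\ge\lambda_n$ ($\lambda_1=1$), $L_k=\min_{Y\in\mathbb{R}^{n\times k},Y^TY=I}\|I-Y^TAY\|=\big(\sum_{\nu=2}^k(1-\lambda_\nu)^2\big)^{1/2}$, and $\|\cdot\|$ is the Frobenius norm. A matrix $X\in\mathbb{R}^{n\times k}$ is in indicator form if there is a partition of $\{1,\dots,n\}$ into $k$ disjoint nonempty sets $R_1,\dots,R_k$ such that $X_{pj}\neq0$ if and only if $p\in R_j$. $\mathcal{O}_{\mathcal{I}}(n,k)$ is the set of matrices in indicator form with $X^TX=I$, and $\mathcal{O}_{\mathcal{I}}^+(n,k)$ the set of entrywise nonnegative matrices in $\mathcal{O}_{\mathcal{I}}(n,k)$. The graph is $k$-partitionable if it has at least $k$ connected components. *)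

theory Defs
  imports "HOL-Analysis.Analysis" "HOL-Combinatorics.Permutations"
begin

text \<open>Matrices are HOL-Analysis vectors of vectors: an n x k matrix is real^'k^'n.
  The norm of a matrix (as an element of real^'k^'k) is exactly its Frobenius norm.\<close>

definition graph_adj :: "real^'n^'n \<Rightarrow> bool" where
  "graph_adj B \<longleftrightarrow> transpose B = B \<and> (\<forall>i j. B $ i $ j \<ge> 0) \<and> (\<forall>i. B $ i $ i = 0)
     \<and> (\<forall>i. (B *v (\<chi> j. 1)) $ i > 0)"

definition deg :: "real^'n^'n \<Rightarrow> real^'n" where
  "deg B = B *v (\<chi> j. 1)"

definition norm_adj :: "real^'n^'n \<Rightarrow> real^'n^'n" where
  "norm_adj B = (\<chi> i j. B $ i $ j / (sqrt (deg B $ i) * sqrt (deg B $ j)))"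

definition indicator_form :: "real^'k^'n \<Rightarrow> bool" where
  "indicator_form X \<longleftrightarrow> (\<exists>R :: 'k \<Rightarrow> 'n set.
      (\<forall>j. R j \<noteq> {}) \<and> (\<forall>i j. i \<noteq> j \<longrightarrow> R i \<inter> R j = {}) \<and> (\<Union>j. R j) = UNIV
      \<and> (\<forall>p j. X $ p $ j \<noteq> 0 \<longleftrightarrow> p \<in> R j))"

definition O_I :: "(real^'k^'n) set" where
  "O_I = {X. indicator_form X \<and> transpose X ** X = mat 1}"

definition O_I_plus :: "(real^'k^'n) set" where
  "O_I_plus = {X. X \<in> O_I \<and> (\<forall>p j. X $ p $ j \<ge> 0)}"

definition Phi_cut :: "real^'n^'n \<Rightarrow> real^'k^'n \<Rightarrow> real" where
  "Phi_cut A X = norm (mat 1 - transpose X ** A ** X)"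

definition Phi_cut_G :: "real^'n^'n \<Rightarrow> 'k::finite itself \<Rightarrow> real" where
  "Phi_cut_G A _ = (INF X\<in>(O_I_plus :: (real^'k^'n) set). Phi_cut A X)"

definition L_k :: "real^'n^'n \<Rightarrow> 'k::finite itself \<Rightarrow> real" where
  "L_k A _ = (INF Y\<in>{Y :: real^'k^'n. transpose Y ** Y = mat 1}. norm (mat 1 - transpose Y ** A ** Y))"

definition perm_matrix :: "real^'n^'n \<Rightarrow> bool" where
  "perm_matrix P \<longleftrightarrow> (\<exists>\<sigma>. \<sigma> permutes (UNIV :: 'n set) \<and> P = (\<chi> i j. if j = \<sigma> i then 1 else 0))"

definition edge_rel :: "real^'n^'n \<Rightarrow> 'n rel" where
  "edge_rel B = {(i, j). B $ i $ j \<noteq> 0}"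

definition components :: "real^'n^'n \<Rightarrow> 'n set set" where
  "components B = UNIV // ((edge_rel B)\<^sup>*)"

definition k_partitionable :: "real^'n^'n \<Rightarrow> nat \<Rightarrow> bool" where
  "k_partitionable B k \<longleftrightarrow> card (components B) \<ge> k"

end

theory Submission
  imports Defs
begin
lemma quad_entry:
  fixes X :: "real^'k^'n"
  shows "(transpose X ** A ** X) $ i $ j = (\<Sum>p\<in>UNIV. \<Sum>q\<in>UNIV. X$p$i * A$p$q * X$q$j)"
proof -
  have "(transpose X ** A ** X) $ i $ j = (\<Sum>q\<in>UNIV. (\<Sum>p\<in>UNIV. X$p$i * A$p$q) * X$q$j)"
    unfolding matrix_matrix_mult_def transpose_def by simp
  also have "\<dots> = (\<Sum>q\<in>UNIV. \<Sum>p\<in>UNIV. X$p$i * A$p$q * X$q$j)"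
    by (simp add: sum_distrib_right)
  also have "\<dots> = (\<Sum>p\<in>UNIV. \<Sum>q\<in>UNIV. X$p$i * A$p$q * X$q$j)"
    by (rule sum.swap)
  finally show ?thesis .
qed

lemma graph_sym: assumes "graph_adj B" shows "B $ q $ p = B $ p $ q"
proof -
  have "transpose B = B" using assms by (simp add: graph_adj_def)
  hence "(transpose B)$q$p = B$q$p" by simp
  thus ?thesis by (simp add: transpose_def)
qed
lemma orth_iff:
  fixes X :: "real^'k^'n"
  shows "transpose X ** X = mat 1 \<longleftrightarrow> (\<forall>i j. (\<Sum>p\<in>UNIV. X$p$i * X$p$j) = (if i = j then 1 else 0))"
  by (simp add: vec_eq_iff matrix_matrix_mult_def transpose_def mat_def)

lemma deg_pos: "graph_adj B \<Longrightarrow> deg B $ p > 0"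
  unfolding graph_adj_def deg_def by auto

lemma deg_sum: "deg B $ p = (\<Sum>q\<in>UNIV. B $ p $ q)"
  by (simp add: deg_def matrix_vector_mult_def)

lemma energy:
  fixes B :: "real^'n::finite^'n" and x :: "'n \<Rightarrow> real"
  assumes g: "graph_adj B"
  shows "(\<Sum>p\<in>UNIV. \<Sum>q\<in>UNIV. x p * norm_adj B $p$q * x q) =
    (\<Sum>p\<in>UNIV. (x p)^2) - (1/2) * (\<Sum>p\<in>UNIV. \<Sum>q\<in>UNIV. B$p$q * (x p / sqrt (deg B $ p) - x q / sqrt (deg B $ q))^2)"
proof -
  define s where "s p = sqrt (deg B $ p)" for p
  define y where "y p = x p / s p" for p
  have sp: "s p > 0" for p using deg_pos[OF g] by (simp add: s_def)
  have s2: "(s p)^2 = deg B $ p" for p using deg_pos[OF g, of p] by (simp add: s_def)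
  have xy: "x p = s p * y p" for p using sp[of p] by (simp add: y_def)
  have t1: "x p * norm_adj B $p$q * x q = B$p$q * y p * y q" for p q
    using sp[of p] sp[of q] by (simp add: xy norm_adj_def s_def[symmetric] field_simps)
  have a: "(\<Sum>p\<in>UNIV. \<Sum>q\<in>UNIV. B$p$q * (y p)^2) = (\<Sum>p\<in>UNIV. (x p)^2)"
  proof -
    have "(\<Sum>p\<in>UNIV. \<Sum>q\<in>UNIV. B$p$q * (y p)^2) = (\<Sum>p\<in>UNIV. deg B $ p * (y p)^2)"
      by (simp add: deg_sum sum_distrib_right)
    also have "\<dots> = (\<Sum>p\<in>UNIV. (x p)^2)"
      by (simp add: xy power_mult_distrib s2)
    finally show ?thesis .
  qed
  have b: "(\<Sum>p\<in>UNIV. \<Sum>q\<in>UNIV. B$p$q * (y q)^2) = (\<Sum>p\<in>UNIV. (x p)^2)"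
    using a by (subst sum.swap) (simp add: graph_sym[OF g])
  have "(\<Sum>p\<in>UNIV. \<Sum>q\<in>UNIV. B$p$q * (y p - y q)^2) =
     (\<Sum>p\<in>UNIV. \<Sum>q\<in>UNIV. B$p$q * (y p)^2) + (\<Sum>p\<in>UNIV. \<Sum>q\<in>UNIV. B$p$q * (y q)^2)
      - 2 * (\<Sum>p\<in>UNIV. \<Sum>q\<in>UNIV. B$p$q * y p * y q)"
    by (simp add: power2_diff algebra_simps sum.distrib sum_subtractf sum_distrib_left)
  moreover have "(\<Sum>p\<in>UNIV. \<Sum>q\<in>UNIV. x p * norm_adj B $p$q * x q) = (\<Sum>p\<in>UNIV. \<Sum>q\<in>UNIV. B$p$q * y p * y q)"
    by (simp add: t1)
  moreover have "(\<Sum>p\<in>UNIV. \<Sum>q\<in>UNIV. B$p$q * (x p / sqrt (deg B $ p) - x q / sqrt (deg B $ q))^2) = (\<Sum>p\<in>UNIV. \<Sum>q\<in>UNIV. B$p$q * (y p - y q)^2)"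
    by (simp add: y_def s_def)
  ultimately show ?thesis using a b by linarith
qed



definition partX :: "('n::finite \<Rightarrow> 'k::finite) \<Rightarrow> ('n \<Rightarrow> real) \<Rightarrow> real^'k^'n" where
  "partX g w = (\<chi> p j. if g p = j then sqrt (w p) / sqrt (\<Sum>q\<in>{q. g q = j}. w q) else 0)"

lemma partX_S_pos:
  fixes g :: "'n::finite \<Rightarrow> 'k::finite" and w :: "'n \<Rightarrow> real"
  assumes "surj g" "\<forall>p. w p > 0"
  shows "(\<Sum>q\<in>{q. g q = j}. w q) > 0"
proof -
  obtain p where "g p = j" using assms(1) by (metis surjD)
  hence "{q. g q = j} \<noteq> {}" by auto
  thus ?thesis using assms(2) sum_pos[of "{q. g q = j}" w] by auto
qed

lemma partX_nz:
  fixes g :: "'n::finite \<Rightarrow> 'k::finite" and w :: "'n \<Rightarrow> real"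
  assumes "surj g" "\<forall>p. w p > 0"
  shows "partX g w $ p $ j \<noteq> 0 \<longleftrightarrow> g p = j"
  using partX_S_pos[OF assms, of j] assms(2)[rule_format, of p] by (auto simp: partX_def)

lemma partX_nonneg:
  fixes g :: "'n::finite \<Rightarrow> 'k::finite" and w :: "'n \<Rightarrow> real"
  assumes "\<forall>p. w p > 0"
  shows "partX g w $ p $ j \<ge> 0"
proof -
  have "\<forall>q. w q \<ge> 0" using assms less_imp_le by blast
  thus ?thesis by (simp add: partX_def sum_nonneg)
qed

lemma partX_orth:
  fixes g :: "'n::finite \<Rightarrow> 'k::finite" and w :: "'n \<Rightarrow> real"
  assumes "surj g" "\<forall>p. w p > 0"
  shows "transpose (partX g w) ** partX g w = mat 1"
  unfolding orth_iff
proof (intro allI)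
  fix i j
  show "(\<Sum>p\<in>UNIV. partX g w $ p $ i * partX g w $ p $ j) = (if i = j then 1 else 0)"
  proof (cases "i = j")
    case False
    then show ?thesis by (auto simp: partX_def intro!: sum.neutral)
  next
    case True
    define S where "S = (\<Sum>q\<in>{q. g q = j}. w q)"
    have S: "S > 0" using partX_S_pos[OF assms] S_def by blast
    have "(\<Sum>p\<in>UNIV. partX g w $ p $ i * partX g w $ p $ j) = (\<Sum>p\<in>UNIV. if g p = j then w p / S else 0)"
      using True S assms(2) by (intro sum.cong) (auto simp: partX_def S_def[symmetric] less_imp_le)
    also have "\<dots> = (\<Sum>p\<in>{p. g p = j}. w p / S)"
      by (simp add: sum.inter_filter[symmetric])
    also have "\<dots> = 1" using S by (simp add: sum_divide_distrib[symmetric] S_def)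
    finally show ?thesis using True by simp
  qed
qed

lemma partX_in:
  fixes g :: "'n::finite \<Rightarrow> 'k::finite" and w :: "'n \<Rightarrow> real"
  assumes "surj g" "\<forall>p. w p > 0"
  shows "partX g w \<in> O_I_plus"
proof -
  have "indicator_form (partX g w)"
    unfolding indicator_form_def
    apply (rule exI[of _ "\<lambda>j. {p. g p = j}"])
    using assms partX_nz[OF assms] surjD[OF assms(1)] by (auto, metis)
  thus ?thesis using partX_orth[OF assms] partX_nonneg[OF assms(2), of g]
    by (simp add: O_I_plus_def O_I_def)
qed



lemma partX_cut:
  fixes B :: "real^'n::finite^'n" and gg :: "'n \<Rightarrow> 'k::finite"
  assumes g: "graph_adj B" and s: "surj gg" and edge: "\<forall>p q. B$p$q \<noteq> 0 \<longrightarrow> gg p = gg q"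
  shows "transpose (partX gg (\<lambda>p. deg B $ p)) ** norm_adj B ** partX gg (\<lambda>p. deg B $ p) = mat 1"
proof -
  define X where "X = partX gg (\<lambda>p. deg B $ p)"
  have w: "\<forall>p. deg B $ p > 0" using deg_pos[OF g] by blast
  have orth: "transpose X ** X = mat 1" unfolding X_def by (rule partX_orth[OF s w])
  have y: "X$p$a / sqrt (deg B $ p) = (if gg p = a then 1 / sqrt (\<Sum>q\<in>{q. gg q = a}. deg B $ q) else 0)" for p a
    using w[rule_format, of p] by (simp add: X_def partX_def)
  have "(transpose X ** norm_adj B ** X) $ a $ b = mat 1 $ a $ b" for a b
  proof (cases "a = b")
    case False
    have "X$p$a * norm_adj B $p$q * X$q$b = 0" for p q
    proof (cases "gg p = a \<and> gg q = b")
      case True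
      hence "B$p$q = 0" using edge False by blast
      thus ?thesis by (simp add: norm_adj_def)
    next
      case False
      thus ?thesis by (auto simp: X_def partX_def)
    qed
    note z = this
    have "(\<Sum>p\<in>UNIV. \<Sum>q\<in>UNIV. X$p$a * norm_adj B $p$q * X$q$b) = 0"
      by (simp only: z sum.neutral_const)
    thus ?thesis using False by (simp add: quad_entry mat_def)
  next
    case True
    have n1: "(\<Sum>p\<in>UNIV. (X$p$a)^2) = 1"
      using orth unfolding orth_iff by (auto simp: power2_eq_square dest: spec[of _ a])
    have "B$p$q * (X$p$a / sqrt (deg B $ p) - X$q$a / sqrt (deg B $ q))^2 = 0" for p q
    proof (cases "B$p$q = 0")
      case False
      hence "gg p = gg q" using edge by blast
      thus ?thesis by (simp add: y)
    qed simp
    note z = this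
    have "(\<Sum>p\<in>UNIV. \<Sum>q\<in>UNIV. B$p$q * (X$p$a / sqrt (deg B $ p) - X$q$a / sqrt (deg B $ q))^2) = 0"
      by (simp only: z sum.neutral_const)
    hence "(\<Sum>p\<in>UNIV. \<Sum>q\<in>UNIV. X$p$a * norm_adj B $p$q * X$q$a) = 1"
      using energy[OF g, of "\<lambda>p. X$p$a"] n1 by simp
    thus ?thesis using True by (simp add: quad_entry mat_def)
  qed
  thus ?thesis unfolding X_def[symmetric] by (simp add: vec_eq_iff)
qed

lemma perm_orth:
  fixes P :: "real^'n::finite^'n"
  assumes "perm_matrix P"
  shows "transpose P ** P = mat 1"
proof -
  obtain \<sigma> where sg: "\<sigma> permutes (UNIV :: 'n set)" and P: "P = (\<chi> i j. if j = \<sigma> i then 1 else 0)"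
    using assms unfolding perm_matrix_def by blast
  have "(\<Sum>p\<in>UNIV. P$p$i * P$p$j) = (if i = j then 1 else 0)" for i j
  proof -
    have "(\<Sum>p\<in>UNIV. P$p$i * P$p$j) = (\<Sum>p\<in>UNIV. (\<lambda>r. if i = r \<and> j = r then 1 else 0) (\<sigma> p))"
      by (intro sum.cong) (auto simp: P)
    also have "\<dots> = (\<Sum>r\<in>UNIV. if i = r \<and> j = r then 1 else (0::real))"
      using sum.reindex_bij_betw[OF permutes_imp_bij[OF sg], of "\<lambda>r. if i = r \<and> j = r then 1 else (0::real)"]
      by simp
    also have "\<dots> = (if i = j then 1 else 0)"
      by (cases "i = j") (auto intro: sum.neutral)
    finally show ?thesis .
  qed
  thus ?thesis unfolding orth_iff by blast
qed

lemma perm_inv: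
  fixes P :: "real^'n::finite^'n" and X :: "real^'k::finite^'n"
  assumes "perm_matrix P"
  shows "Phi_cut (P ** A ** transpose P) (P ** X) = Phi_cut A X"
proof -
  have o: "transpose P ** P = mat 1" by (rule perm_orth[OF assms])
  have "transpose (P ** X) ** (P ** A ** transpose P) ** (P ** X)
      = transpose X ** (transpose P ** P) ** A ** (transpose P ** P) ** X"
    by (simp add: matrix_transpose_mul matrix_mul_assoc)
  also have "\<dots> = transpose X ** A ** X" by (simp add: o)
  finally show ?thesis by (simp add: Phi_cut_def)
qed



definition Sset :: "(real^'k::finite^'n::finite) set" where
  "Sset = {X. (\<forall>p j. 0 \<le> X$p$j) \<and> (\<forall>i j. (\<Sum>p\<in>UNIV. X$p$i * X$p$j) = (if i = j then 1 else 0))}"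

definition Gf :: "real^'n::finite^'n \<Rightarrow> real^'k::finite^'n \<Rightarrow> real" where
  "Gf A X = (\<Sum>j\<in>UNIV. 1 - (\<Sum>p\<in>UNIV. \<Sum>q\<in>UNIV. X$p$j * A$p$q * X$q$j))"

lemma OIp_sub: "O_I_plus \<subseteq> Sset"
  by (auto simp: O_I_plus_def O_I_def Sset_def orth_iff)

lemma Gf_cont: "continuous_on UNIV (Gf A)"
  unfolding Gf_def by (intro continuous_intros)

lemma Sset_closed: "closed (Sset :: (real^'k::finite^'n::finite) set)"
  unfolding Sset_def
  by (intro closed_Collect_conj closed_Collect_all closed_Collect_le closed_Collect_eq continuous_intros)

lemma Sset_entry_le1:
  assumes "X \<in> Sset" shows "\<bar>X$p$j\<bar> \<le> 1"
proof -
  have "(X$p$j)^2 \<le> (\<Sum>q\<in>UNIV. (X$q$j)^2)"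
    by (rule member_le_sum) auto
  also have "\<dots> = 1" using assms by (simp add: Sset_def power2_eq_square)
  finally show ?thesis by (simp add: abs_square_le_1)
qed

lemma Sset_bounded: "bounded (Sset :: (real^'k::finite^'n::finite) set)"
  unfolding bounded_iff
proof (intro exI ballI)
  fix X :: "real^'k^'n" assume X: "X \<in> Sset"
  have "norm X \<le> (\<Sum>p\<in>UNIV. norm (X$p))"
    unfolding norm_vec_def by (rule L2_set_le_sum) simp
  also have "\<dots> \<le> (\<Sum>p\<in>UNIV. \<Sum>j\<in>UNIV. \<bar>X$p$j\<bar>)"
    by (intro sum_mono norm_le_l1_cart)
  also have "\<dots> \<le> (\<Sum>p\<in>(UNIV::'n set). \<Sum>j\<in>(UNIV::'k set). 1)"
    by (intro sum_mono Sset_entry_le1[OF X])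
  finally show "norm X \<le> real (CARD('n) * CARD('k))" by simp
qed

lemma Sset_compact: "compact (Sset :: (real^'k::finite^'n::finite) set)"
  using Sset_closed Sset_bounded compact_eq_bounded_closed by blast



lemma energy_nonneg:
  assumes g: "graph_adj B"
  shows "(\<Sum>p\<in>UNIV. \<Sum>q\<in>UNIV. B$p$q * (x p / sqrt (deg B $ p) - x q / sqrt (deg B $ q))^2) \<ge> 0"
  using g by (intro sum_nonneg mult_nonneg_nonneg) (auto simp: graph_adj_def)

lemma Gf_term_nonneg:
  fixes B :: "real^'n::finite^'n" and X :: "real^'k::finite^'n"
  assumes g: "graph_adj B" and X: "X \<in> Sset"
  shows "1 - (\<Sum>p\<in>UNIV. \<Sum>q\<in>UNIV. X$p$j * norm_adj B$p$q * X$q$j) =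
     (1/2) * (\<Sum>p\<in>UNIV. \<Sum>q\<in>UNIV. B$p$q * (X$p$j / sqrt (deg B $ p) - X$q$j / sqrt (deg B $ q))^2)"
proof -
  have n1: "(\<Sum>p\<in>UNIV. (X$p$j)^2) = 1" using X by (simp add: Sset_def power2_eq_square)
  show ?thesis using energy[OF g, of "\<lambda>p. X$p$j"] n1 by simp
qed

lemma Gf_nonneg:
  fixes B :: "real^'n::finite^'n" and X :: "real^'k::finite^'n"
  assumes g: "graph_adj B" and X: "X \<in> Sset"
  shows "Gf (norm_adj B) X \<ge> 0"
  unfolding Gf_def Gf_term_nonneg[OF g X]
  using energy_nonneg[OF g] by (intro sum_nonneg) auto

lemma Gf_zero_imp:
  fixes B :: "real^'n::finite^'n" and X :: "real^'k::finite^'n"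
  assumes g: "graph_adj B" and X: "X \<in> Sset" and z: "Gf (norm_adj B) X = 0"
  shows "CARD('k) \<le> card (components B)"
proof -
  define r where "r = (edge_rel B)\<^sup>*"
  define T where "T j = {p. X$p$j \<noteq> 0}" for j
  have Bnn: "B$p$q \<ge> 0" for p q using g by (simp add: graph_adj_def)
  have Xnn: "X$p$j \<ge> 0" for p j using X by (simp add: Sset_def)
  have en0: "(\<Sum>p\<in>UNIV. \<Sum>q\<in>UNIV. B$p$q * (X$p$j / sqrt (deg B $ p) - X$q$j / sqrt (deg B $ q))^2) = 0" for j
  proof -
    have "\<forall>j\<in>UNIV. (1/2) * (\<Sum>p\<in>UNIV. \<Sum>q\<in>UNIV. B$p$q * (X$p$j / sqrt (deg B $ p) - X$q$j / sqrt (deg B $ q))^2) = 0"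
      using z unfolding Gf_def Gf_term_nonneg[OF g X]
      by (subst sum_nonneg_eq_0_iff[symmetric]) (auto intro: energy_nonneg[OF g])
    thus ?thesis by simp
  qed
  have edge: "X$p$j / sqrt (deg B $ p) = X$q$j / sqrt (deg B $ q)" if "B$p$q \<noteq> 0" for p q j
  proof -
    have "\<forall>p\<in>UNIV. (\<Sum>q\<in>UNIV. B$p$q * (X$p$j / sqrt (deg B $ p) - X$q$j / sqrt (deg B $ q))^2) = 0"
      using en0[of j] by (subst sum_nonneg_eq_0_iff[symmetric]) (auto intro!: sum_nonneg mult_nonneg_nonneg Bnn)
    hence "\<forall>q\<in>UNIV. B$p$q * (X$p$j / sqrt (deg B $ p) - X$q$j / sqrt (deg B $ q))^2 = 0"
      by (subst sum_nonneg_eq_0_iff[symmetric]) (auto intro!: mult_nonneg_nonneg Bnn)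
    thus ?thesis using that by auto
  qed
  have Tstep: "q \<in> T j" if "p \<in> T j" "(p, q) \<in> edge_rel B" for p q j
  proof -
    have "B$p$q \<noteq> 0" using that(2) by (simp add: edge_rel_def)
    from edge[OF this, of j] have "X$p$j / sqrt (deg B $ p) = X$q$j / sqrt (deg B $ q)" .
    thus ?thesis using that(1) deg_pos[OF g, of p] deg_pos[OF g, of q] by (auto simp: T_def)
  qed
  have Tclosed: "q \<in> T j" if "(p, q) \<in> r" "p \<in> T j" for p q j
    using that(1,2) unfolding r_def
    by (induction rule: rtrancl_induct) (auto intro: Tstep)
  have Tne: "T j \<noteq> {}" for j
  proof
    assume "T j = {}"
    hence "\<forall>p. X$p$j = 0" by (auto simp: T_def)
    moreover have "(\<Sum>p\<in>UNIV. X$p$j * X$p$j) = 1" using X by (simp add: Sset_def)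
    ultimately show False by simp
  qed
  have Tdisj: "i = j" if "p \<in> T i" "p \<in> T j" for p i j
  proof (rule ccontr)
    assume "i \<noteq> j"
    hence "(\<Sum>p\<in>UNIV. X$p$i * X$p$j) = 0" using X by (simp add: Sset_def)
    hence "\<forall>p\<in>UNIV. X$p$i * X$p$j = 0"
      by (subst sum_nonneg_eq_0_iff[symmetric]) (auto intro!: mult_nonneg_nonneg Xnn)
    thus False using that by (auto simp: T_def)
  qed
  define pt where "pt j = (SOME p. p \<in> T j)" for j
  have pt: "pt j \<in> T j" for j using Tne[of j] unfolding pt_def by (meson ex_in_conv someI_ex)
  define f where "f j = r `` {pt j}" for j
  have rrefl: "(p, p) \<in> r" for p by (simp add: r_def)
  have inj: "inj f"
  proof (rule injI)
    fix i j assume "f i = f j"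
    hence "pt j \<in> r `` {pt i}" using rrefl[of "pt j"] by (auto simp: f_def)
    hence "(pt i, pt j) \<in> r" by simp
    hence "pt j \<in> T i" using Tclosed pt by blast
    thus "i = j" using Tdisj pt by blast
  qed
  have rng: "range f \<subseteq> components B"
    by (auto simp: f_def components_def r_def intro!: quotientI)
  have fin: "finite (components B)" by simp
  show ?thesis using card_inj_on_le[OF _ rng fin] inj by simp
qed



lemma OIp_ne:
  assumes "CARD('k::finite) \<le> CARD('n::finite)"
  shows "(O_I_plus :: (real^'k^'n) set) \<noteq> {}"
proof -
  obtain h :: "'k \<Rightarrow> 'n" where "inj_on h UNIV"
    using card_le_inj[of "UNIV :: 'k set" "UNIV :: 'n set"] assms by auto
  hence "surj (inv h)" by (simp add: inj_imp_surj_inv)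
  hence "partX (inv h) (\<lambda>_. 1) \<in> (O_I_plus :: (real^'k^'n) set)"
    by (intro partX_in) auto
  thus ?thesis by blast
qed

lemma comp_surj:
  fixes B :: "real^'n::finite^'n"
  assumes g: "graph_adj B" and c: "CARD('k::finite) \<le> card (components B)"
  shows "\<exists>gg :: 'n \<Rightarrow> 'k. surj gg \<and> (\<forall>p q. B$p$q \<noteq> 0 \<longrightarrow> gg p = gg q)"
proof -
  define r where "r = (edge_rel B)\<^sup>*"
  have symE: "sym (edge_rel B)" using graph_sym[OF g] by (auto simp: sym_def edge_rel_def)
  have eq: "equiv UNIV r" unfolding r_def
    by (intro equivI refl_rtrancl sym_rtrancl[OF symE] trans_rtrancl) auto
  obtain f :: "'k \<Rightarrow> 'n set" where f: "f ` UNIV \<subseteq> components B" "inj_on f UNIV"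
    using card_le_inj[of "UNIV :: 'k set" "components B"] c by auto
  define gg where "gg p = inv f (r `` {p})" for p
  have ex: "\<exists>p. gg p = j" for j
  proof -
    have "f j \<in> UNIV // r" using f(1) by (auto simp: components_def r_def)
    then obtain p where "f j = r `` {p}" by (auto elim: quotientE)
    hence "gg p = j" using f(2) unfolding gg_def by (metis inv_f_f)
    thus ?thesis by blast
  qed
  have "surj gg" unfolding surj_def using ex by metis
  moreover have "\<forall>p q. B$p$q \<noteq> 0 \<longrightarrow> gg p = gg q"
  proof (intro allI impI)
    fix p q assume "B$p$q \<noteq> 0"
    hence "(p, q) \<in> r" by (auto simp: r_def edge_rel_def)
    hence "r `` {p} = r `` {q}" using equiv_class_eq[OF eq] by blast
    thus "gg p = gg q" by (simp add: gg_def)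
  qed
  ultimately show ?thesis by blast
qed

lemma diag_le_Phi:
  fixes X :: "real^'k::finite^'n::finite"
  shows "Gf A X \<le> real CARD('k) * Phi_cut A X"
proof -
  define M where "M = mat 1 - transpose X ** A ** X"
  have "M$j$j = 1 - (\<Sum>p\<in>UNIV. \<Sum>q\<in>UNIV. X$p$j * A$p$q * X$q$j)" for j
    by (simp add: M_def quad_entry mat_def)
  hence "Gf A X = (\<Sum>j\<in>UNIV. M$j$j)" by (simp add: Gf_def)
  also have "\<dots> \<le> (\<Sum>j\<in>(UNIV::'k set). norm M)"
  proof (intro sum_mono)
    fix j
    have "M$j$j \<le> \<bar>M$j$j\<bar>" by simp
    also have "\<dots> \<le> norm (M$j)" by (rule component_le_norm_cart)
    also have "\<dots> \<le> norm M" by (metis Finite_Cartesian_Product.norm_nth_le)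
    finally show "M$j$j \<le> norm M" .
  qed
  also have "\<dots> = real CARD('k) * Phi_cut A X" by (simp add: Phi_cut_def M_def)
  finally show ?thesis .
qed



theorem proposition3:
  fixes B :: "real^'n::finite^'n"
  assumes "graph_adj B"
    and "CARD('k::finite) \<le> CARD('n)"
  shows "(\<forall>X \<in> (O_I_plus :: (real^'k^'n) set). Phi_cut (norm_adj B) X \<ge> 0
            \<and> (\<forall>P. perm_matrix P \<longrightarrow>
                   Phi_cut (P ** norm_adj B ** transpose P) (P ** X) = Phi_cut (norm_adj B) X))
       \<and> (Phi_cut_G (norm_adj B) TYPE('k) = 0 \<longleftrightarrow> k_partitionable B CARD('k))
       \<and> L_k (norm_adj B) TYPE('k) \<le> Phi_cut_G (norm_adj B) TYPE('k)"
proof -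
  note g = assms(1)
  define A where "A = norm_adj B"
  have ne: "(O_I_plus :: (real^'k^'n) set) \<noteq> {}" by (rule OIp_ne[OF assms(2)])
  have bdd: "bdd_below ((Phi_cut A :: real^'k^'n \<Rightarrow> real) ` O_I_plus)"
    by (rule bdd_belowI[of _ 0]) (auto simp: Phi_cut_def)
  have part1: "\<forall>X \<in> (O_I_plus :: (real^'k^'n) set). Phi_cut A X \<ge> 0
            \<and> (\<forall>P. perm_matrix P \<longrightarrow> Phi_cut (P ** A ** transpose P) (P ** X) = Phi_cut A X)"
    using perm_inv by (auto simp: Phi_cut_def)
  have ge0: "Phi_cut_G A TYPE('k) \<ge> 0"
    unfolding Phi_cut_G_def using ne by (intro cINF_greatest) (auto simp: Phi_cut_def)
  have part2: "Phi_cut_G A TYPE('k) = 0 \<longleftrightarrow> k_partitionable B CARD('k)"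
  proof
    assume "k_partitionable B CARD('k)"
    hence "CARD('k) \<le> card (components B)" by (simp add: k_partitionable_def)
    then obtain gg :: "'n \<Rightarrow> 'k" where gg: "surj gg" "\<forall>p q. B$p$q \<noteq> 0 \<longrightarrow> gg p = gg q"
      using comp_surj[OF g] by blast
    define X0 where "X0 = partX gg (\<lambda>p. deg B $ p)"
    have w: "\<forall>p. deg B $ p > 0" using deg_pos[OF g] by blast
    have X0: "X0 \<in> O_I_plus" unfolding X0_def by (rule partX_in[OF gg(1) w])
    have "Phi_cut A X0 = 0" using partX_cut[OF g gg] by (simp add: Phi_cut_def A_def X0_def)
    hence "Phi_cut_G A TYPE('k) \<le> 0"
      unfolding Phi_cut_G_def using cINF_lower[OF bdd X0] by simp
    thus "Phi_cut_G A TYPE('k) = 0" using ge0 by simp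
  next
    assume z: "Phi_cut_G A TYPE('k) = 0"
    show "k_partitionable B CARD('k)"
    proof (rule ccontr)
      assume "\<not> k_partitionable B CARD('k)"
      hence lt: "\<not> CARD('k) \<le> card (components B)" by (simp add: k_partitionable_def)
      have Sne: "(Sset :: (real^'k^'n) set) \<noteq> {}" using ne OIp_sub by blast
      obtain X0 where X0: "X0 \<in> (Sset :: (real^'k^'n) set)" and mn: "\<forall>Y\<in>(Sset :: (real^'k^'n) set). Gf A X0 \<le> Gf A Y"
        using continuous_attains_inf[OF Sset_compact[where 'k='k and 'n='n] Sne continuous_on_subset[OF Gf_cont[of A] subset_UNIV]]
        by blast
      have pos: "Gf A X0 > 0"
        using Gf_nonneg[OF g X0] Gf_zero_imp[OF g X0] lt by (force simp: A_def)
      have "Gf A X0 / real CARD('k) \<le> Phi_cut A X" if "X \<in> O_I_plus" for X :: "real^'k^'n"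
      proof -
        have "Gf A X0 \<le> Gf A X" using mn OIp_sub that by blast
        also have "\<dots> \<le> real CARD('k) * Phi_cut A X" by (rule diag_le_Phi)
        finally show ?thesis by (simp add: field_simps)
      qed
      hence "Gf A X0 / real CARD('k) \<le> Phi_cut_G A TYPE('k)"
        unfolding Phi_cut_G_def using ne by (intro cINF_greatest) auto
      moreover have "Gf A X0 / real CARD('k) > 0" using pos by simp
      ultimately show False using z by simp
    qed
  qed
  have part3: "L_k A TYPE('k) \<le> Phi_cut_G A TYPE('k)"
    unfolding L_k_def Phi_cut_G_def Phi_cut_def
    by (rule cINF_superset_mono[OF ne]) (auto simp: O_I_plus_def O_I_def intro!: bdd_belowI[of _ 0])
  show ?thesis using part1 part2 part3 by (simp add: A_def)
qed

end
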